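(* Let $U\subset\mathbb{R}^{n+1}$ be a bounded open convex domain with $C^3$ boundary of positive normal curvatures, $o\in U$ the origin, $\omega$ the radial function of $\partial U$, $c=\max_{u\in\mathbb{S}^n}\frac{\omega(u)}{\omega(-u)}$, and let $\Phi:\mathbb{S}^n\times\mathbb{R}_{\ge0}\to U$, $\Phi(u,s)=\tanh(s)\,\omega(u)\,u$. Put $d_1=-\frac12\ln\big[\frac12(1+\frac1c)\big]$ and $d_2=-\frac12\ln\big[\frac12(1+c)\big]$. Then for every $d\ge d_1$ there is $\rho_0$ such that $B_\rho^{n+1}\subseteq\Phi(\mathbb{S}^n\times[0,\rho+d])$ for all $\rho\ge\rho_0$, and for every $d\le d_2$ there is $\rho_0$ such that $\Phi(\mathbb{S}^n\times[0,\rho+d])\subseteq B_\rho^{n+1}$ for all $\rho\ge\rho_0$. In particular, for $\rho$ large, $\mathbf{Vol}(\Phi(\mathbb{S}^n\times[0,\rho+d_2]))\le\mathbf{Vol}(B_\rho^{n+1})\le\mathbf{Vol}(\Phi(\mathbb{S}^n\times[0,\rho+d_1]))$; if $U$ is centrally symmetric about $o$ then $d_1=d_2=0$.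
   Context: $B_\rho^{n+1}$ is the closed metric ball of radius $\rho$ centered at $o$ for the Hilbert distance $d_U(p,q)=\frac12\ln\big(\frac{\|q-q_1\|}{\|q-p_1\|}\cdot\frac{\|p-p_1\|}{\|p-q_1\|}\big)$, where $p_1,q_1$ are the intersection points with $\partial U$ of the half-lines $p+\mathbb{R}_{-}(q-p)$, $p+\mathbb{R}_{+}(q-p)$. The radial function $\omega:\mathbb{S}^n\to\mathbb{R}_+$ is such that $u\mapsto\omega(u)u$ parametrizes $\partial U$. $\mathbf{Vol}$ is the Busemann–Hausdorff volume of $(U,F_U)$, i.e. $\int\sigma(p)\,dp$ with $\sigma(p)=\mathbf{Vol}_E(\mathbb{B}^{n+1})/\mathbf{Vol}_E(\{v:F_U(p,v)<1\})$, $F_U(p,v)=\frac12\|v\|\big(\frac1{\|p-p_-\|}+\frac1{\|p-p_+\|}\big)$, $p_\mp$ the intersection points of $p+\mathbb{R}_\mp v$ with $\partial U$. *)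

theory Defs
  imports "HOL-Analysis.Analysis"
begin

text \<open>Bounded open convex domain U with C^3 boundary of positive normal curvatures:
  there is an open neighbourhood N of the boundary and a C^3 defining function f on N
  (gradient G, Hessian H, third derivative T continuous), U \<inter> N = {f < 0}, f = 0 and
  G \<noteq> 0 on the boundary, and the Hessian is positive definite on tangent vectors
  (the second fundamental form w.r.t. the outer normal G/|G| is positive definite).\<close>
definition C3_pos_curv_boundary :: "'a::euclidean_space set \<Rightarrow> bool" where
  "C3_pos_curv_boundary U \<longleftrightarrow>
     (\<exists>N (f::'a \<Rightarrow> real) (G::'a \<Rightarrow> 'a) (H::'a \<Rightarrow> ('a \<Rightarrow>\<^sub>L 'a))
        (T::'a \<Rightarrow> ('a \<Rightarrow>\<^sub>L ('a \<Rightarrow>\<^sub>L 'a))).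
        open N \<and> frontier U \<subseteq> N \<and>
        (\<forall>x\<in>N. (f has_derivative (\<lambda>v. G x \<bullet> v)) (at x)) \<and>
        (\<forall>x\<in>N. (G has_derivative blinfun_apply (H x)) (at x)) \<and>
        (\<forall>x\<in>N. (H has_derivative blinfun_apply (T x)) (at x)) \<and>
        continuous_on N T \<and>
        (\<forall>x\<in>N. x \<in> U \<longleftrightarrow> f x < 0) \<and>
        (\<forall>x\<in>frontier U. f x = 0 \<and> G x \<noteq> 0) \<and>
        (\<forall>x\<in>frontier U. \<forall>v. v \<noteq> 0 \<and> G x \<bullet> v = 0 \<longrightarrow> blinfun_apply (H x) v \<bullet> v > 0))"

text \<open>Parameter t > 0 with p + t v on the boundary of U (unique for p in a bounded open
  convex U and v \<noteq> 0).\<close>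
definition exit_param :: "'a::euclidean_space set \<Rightarrow> 'a \<Rightarrow> 'a \<Rightarrow> real" where
  "exit_param U p v = (THE t. t > 0 \<and> p + t *\<^sub>R v \<in> frontier U)"

definition bdry_point :: "'a::euclidean_space set \<Rightarrow> 'a \<Rightarrow> 'a \<Rightarrow> 'a" where
  "bdry_point U p v = p + exit_param U p v *\<^sub>R v"

definition hilbert_dist :: "'a::euclidean_space set \<Rightarrow> 'a \<Rightarrow> 'a \<Rightarrow> real" where
  "hilbert_dist U p q =
     (if p = q then 0 else
       (let p1 = bdry_point U p (p - q); q1 = bdry_point U p (q - p) in
         1/2 * ln ((norm (p - q1) / norm (p - p1)) * (norm (q - p1) / norm (q - q1)))))"

definition hball :: "'a::euclidean_space set \<Rightarrow> real \<Rightarrow> 'a set" where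
  "hball U \<rho> = {p \<in> U. hilbert_dist U 0 p \<le> \<rho>}"

definition radial :: "'a::euclidean_space set \<Rightarrow> 'a \<Rightarrow> real" where
  "radial U u = exit_param U 0 u"

definition PhiMap :: "'a::euclidean_space set \<Rightarrow> 'a \<Rightarrow> real \<Rightarrow> 'a" where
  "PhiMap U u s = (tanh s * radial U u) *\<^sub>R u"

definition PhiImage :: "'a::euclidean_space set \<Rightarrow> real \<Rightarrow> 'a set" where
  "PhiImage U r = {PhiMap U u s | u s. u \<in> sphere 0 1 \<and> 0 \<le> s \<and> s \<le> r}"

definition finsler_U :: "'a::euclidean_space set \<Rightarrow> 'a \<Rightarrow> 'a \<Rightarrow> real" where
  "finsler_U U p v = (if v = 0 then 0 else
      1/2 * norm v * (1 / norm (p - bdry_point U p (- v)) + 1 / norm (p - bdry_point U p v)))"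

definition BH_density :: "'a::euclidean_space set \<Rightarrow> 'a \<Rightarrow> real" where
  "BH_density U p = measure lebesgue (ball (0::'a) 1) / measure lebesgue {v. finsler_U U p v < 1}"

definition BH_vol :: "'a::euclidean_space set \<Rightarrow> 'a set \<Rightarrow> real" where
  "BH_vol U A = (LINT p:A|lebesgue. BH_density U p)"

end

theory Submission
  imports Defs "HOL-Analysis.Analysis"
begin


lemma tanh_artanh_real:
  fixes x :: real assumes "-1 < x" "x < 1" shows "tanh (artanh x) = x"
proof -
  have e: "exp (- 2 * artanh x) = (1 - x) / (1 + x)"
  proof -
    have "- 2 * artanh x = ln ((1 - x) / (1 + x))"
      using assms by (simp add: artanh_def ln_div)
    thus ?thesis using assms by simp
  qed
  show ?thesis unfolding tanh_real_altdef e using assms by (simp add: field_simps)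
qed

lemma ineq1:
  fixes g m k :: real
  assumes "0 < g" "g < 1" "0 < m" "m \<le> 1" "m \<le> k"
  shows "ln ((1+g)/(1-g))/2 \<le> ln ((1+k*g)/(1-g))/2 + (- 1/2 * ln (1/2*(1+m)))"
proof -
  have poly: "(1+g)*(1+m) \<le> 2*(1+k*g)"
  proof (cases "2*k \<ge> 1+m")
    case True
    have "0 \<le> g*(2*k-1-m)" using True assms by simp
    thus ?thesis using assms by (simp add: algebra_simps)
  next
    case False
    have "g*(2*k-1-m) \<ge> 1*(2*k-1-m)"
      using False assms by (intro mult_right_mono_neg) auto
    thus ?thesis using assms by (simp add: algebra_simps)
  qed
  have k: "k > 0" using assms by simp
  have pos1: "(1+g)/(1-g) > 0" "1/2*(1+m) > 0" using assms by auto
  have "ln ((1+g)/(1-g)) + ln (1/2*(1+m)) = ln ((1+g)/(1-g) * (1/2*(1+m)))"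
    using pos1 by (simp only: ln_mult_pos)
  also have "(1+g)/(1-g) * (1/2*(1+m)) = ((1+g)*(1+m)/2)/(1-g)" by simp
  also have "ln (((1+g)*(1+m)/2)/(1-g)) \<le> ln ((1+k*g)/(1-g))"
  proof (subst ln_le_cancel_iff)
    show "0 < ((1+g)*(1+m)/2)/(1-g)" using assms by simp
    show "0 < (1+k*g)/(1-g)" using assms k by (simp add: add_pos_pos)
    show "((1+g)*(1+m)/2)/(1-g) \<le> (1+k*g)/(1-g)"
      using poly assms by (intro divide_right_mono) auto
  qed
  finally show ?thesis by simp
qed

lemma ineq2:
  fixes t k c :: real
  assumes "0 < t" "t < 1" "0 < k" "k \<le> c" "1 \<le> c"
  shows "ln ((1+t*k)/(1-t))/2 \<le> ln ((1+t)/(1-t))/2 - (- 1/2 * ln (1/2*(1+c)))"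
proof -
  have poly: "2*(1+t*k) \<le> (1+t)*(1+c)"
  proof -
    have "t*k \<le> t*c" using assms by simp
    moreover have "0 \<le> (c-1)*(1-t)" using assms by simp
    ultimately show ?thesis by (simp add: algebra_simps)
  qed
  have "ln ((1+t*k)/(1-t)) \<le> ln (((1+t)*(1+c)/2)/(1-t))"
  proof (subst ln_le_cancel_iff)
    show "0 < ((1+t)*(1+c)/2)/(1-t)" using assms by simp
    show "0 < (1+t*k)/(1-t)" using assms by (simp add: add_pos_pos)
    show "(1+t*k)/(1-t) \<le> ((1+t)*(1+c)/2)/(1-t)"
      using poly assms by (intro divide_right_mono) auto
  qed
  also have "((1+t)*(1+c)/2)/(1-t) = (1+t)/(1-t) * (1/2*(1+c))" by simp
  also have "ln \<dots> = ln ((1+t)/(1-t)) + ln (1/2*(1+c))"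
    using assms by (intro ln_mult_pos) auto
  finally show ?thesis by simp
qed

lemma set_int_mono_sets:
  fixes f :: "_ \<Rightarrow> real"
  assumes "set_integrable M C f" "A \<in> sets M" "B \<in> sets M" "A \<subseteq> B" "B \<subseteq> C" "\<And>x. 0 \<le> f x"
  shows "set_lebesgue_integral M A f \<le> set_lebesgue_integral M B f"
proof -
  have iB: "set_integrable M B f" using set_integrable_subset[OF assms(1) assms(3) assms(5)] .
  have iA: "set_integrable M A f" using set_integrable_subset[OF iB assms(2) assms(4)] .
  show ?thesis unfolding set_lebesgue_integral_def
    using iA iB unfolding set_integrable_def
    by (intro integral_mono) (use assms(4,6) in \<open>auto simp: indicator_def\<close>)
qed

lemma thresholds_eq2:
  fixes x y :: real
  assumes "x > 0" "y > 0" "\<forall>a>0. x < a \<longleftrightarrow> y < a"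
  shows "x = y"
proof (rule ccontr)
  assume "x \<noteq> y"
  then consider "x < y" | "y < x" by linarith
  then show False
  proof cases
    case 1 then show ?thesis using assms(1) assms(3)[rule_format, of "(x+y)/2"] by auto
  next
    case 2 then show ?thesis using assms(2) assms(3)[rule_format, of "(x+y)/2"] by auto
  qed
qed



lemma thresholds_eq:
  fixes x y :: real
  assumes "x > 0" "y > 0" "\<forall>s\<ge>0. s < x \<longleftrightarrow> s < y"
  shows "x = y"
proof (rule ccontr)
  assume "x \<noteq> y"
  then consider "x < y" | "y < x" by linarith
  then show False
  proof cases
    case 1 then show ?thesis using assms(1) assms(3)[rule_format, of "(x+y)/2"] by auto
  next
    case 2 then show ?thesis using assms(2) assms(3)[rule_format, of "(x+y)/2"] by auto
  qed
qed

definition gauge :: "'a::euclidean_space set \<Rightarrow> 'a \<Rightarrow> real" where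
  "gauge U p = (if p = 0 then 0 else 1 / exit_param U 0 p)"

definition finsler_set :: "'a::euclidean_space set \<Rightarrow> ('a \<times> 'a) set" where
  "finsler_set U = {(p,v). \<exists>\<alpha>>0. \<exists>\<beta>>0. p + \<alpha> *\<^sub>R v \<in> U \<and> p - \<beta> *\<^sub>R v \<in> U \<and> 1/\<alpha> + 1/\<beta> < 2}"

context
  fixes U :: "'a::euclidean_space set"
  assumes bU: "bounded U" and oU: "open U" and cU: "convex U"
begin

lemma frontier_open_eq: "frontier U = closure U - U"
  using oU by (simp add: frontier_def interior_open)

lemma exit_exists:
  assumes p: "p \<in> U" and v: "v \<noteq> 0"
  shows "\<exists>t>0. p + t *\<^sub>R v \<in> frontier U \<and> (\<forall>s\<ge>0. p + s *\<^sub>R v \<in> U \<longleftrightarrow> s < t)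
          \<and> (\<forall>s\<ge>0. p + s *\<^sub>R v \<in> closure U \<longleftrightarrow> s \<le> t)"
proof -
  define R where "R = (\<lambda>s. p + s *\<^sub>R v) ` {0..}"
  have conR: "connected R" unfolding R_def
    by (intro connected_continuous_image continuous_intros) auto
  have "p \<in> R" unfolding R_def by (auto intro!: image_eqI[where x=0])
  hence n1: "R \<inter> U \<noteq> {}" using p by auto
  obtain B where B: "\<forall>x\<in>U. norm x \<le> B" using bU bounded_iff by auto
  define s0 where "s0 = (\<bar>B\<bar> + norm p + 1) / norm v"
  have s0: "s0 \<ge> 0" using v by (simp add: s0_def)
  have "norm (s0 *\<^sub>R v) = \<bar>B\<bar> + norm p + 1" using v by (simp add: s0_def)
  moreover have "norm (s0 *\<^sub>R v) \<le> norm (p + s0 *\<^sub>R v) + norm p"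
    by (metis add_diff_cancel_left' norm_triangle_ineq4 add.commute)
  ultimately have "norm (p + s0 *\<^sub>R v) > B" by linarith
  hence "p + s0 *\<^sub>R v \<notin> U" using B by force
  moreover have "p + s0 *\<^sub>R v \<in> R" unfolding R_def using s0 by auto
  ultimately have n2: "R - U \<noteq> {}" by auto
  obtain x where x: "x \<in> R" "x \<in> frontier U" using connected_Int_frontier[OF conR n1 n2] by auto
  then obtain t where t: "t \<ge> 0" "x = p + t *\<^sub>R v" unfolding R_def by auto
  have xU: "x \<notin> U" "x \<in> closure U" using x(2) frontier_open_eq by auto
  have tpos: "t > 0" using t xU p by (cases "t = 0") auto
  have intU: "interior U = U" using oU interior_open by auto
  have below: "p + s *\<^sub>R v \<in> U" if "0 \<le> s" "s < t" for s
  proof (cases "s = 0")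
    case True then show ?thesis using p by simp
  next
    case False
    have "p \<noteq> x" using xU p by auto
    moreover have "p + s *\<^sub>R v = (1 - s/t) *\<^sub>R p + (s/t) *\<^sub>R x"
      using tpos by (simp add: t algebra_simps)
    ultimately have "p + s *\<^sub>R v \<in> open_segment p x"
      unfolding in_segment using that False tpos
      by (intro conjI exI[where x="s/t"]) (auto simp: field_simps)
    thus ?thesis using in_interior_closure_convex_segment[OF cU _ xU(2)] p intU by auto
  qed
  have above: "p + s *\<^sub>R v \<notin> closure U" if "s > t" for s
  proof
    assume cl: "p + s *\<^sub>R v \<in> closure U"
    have "p \<noteq> p + s *\<^sub>R v" using that tpos v by auto
    moreover have "x = (1 - t/s) *\<^sub>R p + (t/s) *\<^sub>R (p + s *\<^sub>R v)"
      using tpos that by (simp add: t algebra_simps)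
    ultimately have "x \<in> open_segment p (p + s *\<^sub>R v)"
      unfolding in_segment using that tpos
      by (intro conjI exI[where x="t/s"]) (auto simp: field_simps)
    thus False using in_interior_closure_convex_segment[OF cU _ cl] p intU xU by auto
  qed
  show ?thesis
  proof (intro exI[of _ t] conjI allI impI)
    show "p + t *\<^sub>R v \<in> frontier U" using x t by simp
    fix s :: real assume s: "s \<ge> 0"
    show "p + s *\<^sub>R v \<in> U \<longleftrightarrow> s < t"
      using below[OF s] above[of s] xU t closure_subset by (cases "s < t"; cases "s = t") auto
    show "p + s *\<^sub>R v \<in> closure U \<longleftrightarrow> s \<le> t"
      using below[OF s] above[of s] xU t closure_subset by (cases "s < t"; cases "s = t") auto
  qed (use tpos in auto)
qed

lemma exit_param_props:
  assumes p: "p \<in> U" and v: "v \<noteq> 0"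
  shows "exit_param U p v > 0" "p + exit_param U p v *\<^sub>R v \<in> frontier U"
    "\<And>s. s \<ge> 0 \<Longrightarrow> p + s *\<^sub>R v \<in> U \<longleftrightarrow> s < exit_param U p v"
    "\<And>s. s \<ge> 0 \<Longrightarrow> p + s *\<^sub>R v \<in> closure U \<longleftrightarrow> s \<le> exit_param U p v"
proof -
  obtain t where t: "t > 0" "p + t *\<^sub>R v \<in> frontier U" "\<forall>s\<ge>0. p + s *\<^sub>R v \<in> U \<longleftrightarrow> s < t"
     "\<forall>s\<ge>0. p + s *\<^sub>R v \<in> closure U \<longleftrightarrow> s \<le> t"
    using exit_exists[OF p v] by blast
  have "exit_param U p v = t" unfolding exit_param_def
  proof (rule the_equality)
    fix t' assume t': "t' > 0 \<and> p + t' *\<^sub>R v \<in> frontier U"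
    hence "p + t' *\<^sub>R v \<in> closure U" "p + t' *\<^sub>R v \<notin> U" using frontier_open_eq by auto
    thus "t' = t" using t t' by force
  qed (use t in auto)
  thus "exit_param U p v > 0" "p + exit_param U p v *\<^sub>R v \<in> frontier U"
    "\<And>s. s \<ge> 0 \<Longrightarrow> p + s *\<^sub>R v \<in> U \<longleftrightarrow> s < exit_param U p v"
    "\<And>s. s \<ge> 0 \<Longrightarrow> p + s *\<^sub>R v \<in> closure U \<longleftrightarrow> s \<le> exit_param U p v"
    using t by auto
qed

lemma exit_param_scale:
  assumes p: "p \<in> U" and v: "v \<noteq> 0" and a: "a > 0"
  shows "exit_param U p (a *\<^sub>R v) = exit_param U p v / a"
proof (rule thresholds_eq)
  have av: "a *\<^sub>R v \<noteq> 0" using v a by auto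
  show "exit_param U p (a *\<^sub>R v) > 0" using exit_param_props(1)[OF p av] .
  show "exit_param U p v / a > 0" using exit_param_props(1)[OF p v] a by simp
  show "\<forall>s\<ge>0. s < exit_param U p (a *\<^sub>R v) \<longleftrightarrow> s < exit_param U p v / a"
  proof (intro allI impI)
    fix s :: real assume s: "s \<ge> 0"
    have "s < exit_param U p (a *\<^sub>R v) \<longleftrightarrow> p + (s * a) *\<^sub>R v \<in> U"
      using exit_param_props(3)[OF p av s] by simp
    also have "\<dots> \<longleftrightarrow> s * a < exit_param U p v"
      using exit_param_props(3)[OF p v, of "s*a"] s a by simp
    also have "\<dots> \<longleftrightarrow> s < exit_param U p v / a" using a by (simp add: field_simps)
    finally show "s < exit_param U p (a *\<^sub>R v) \<longleftrightarrow> s < exit_param U p v / a" .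
  qed
qed

context
  assumes z: "0 \<in> U"
begin

lemma gauge_pos: "p \<noteq> 0 \<Longrightarrow> gauge U p > 0"
  using exit_param_props(1)[OF z] by (simp add: gauge_def)

lemma gauge_nonneg: "gauge U p \<ge> 0"
  using gauge_pos by (cases "p = 0") (auto simp: gauge_def intro: less_imp_le)

lemma gauge_scale: "a > 0 \<Longrightarrow> gauge U (a *\<^sub>R p) = a * gauge U p"
  using exit_param_scale[OF z] by (auto simp: gauge_def)

lemma gauge_U: "p \<in> U \<longleftrightarrow> gauge U p < 1"
proof (cases "p = 0")
  case True then show ?thesis using z by (simp add: gauge_def)
next
  case False
  have "p \<in> U \<longleftrightarrow> 1 < exit_param U 0 p" using exit_param_props(3)[OF z False, of 1] by simp
  also have "\<dots> \<longleftrightarrow> gauge U p < 1" using exit_param_props(1)[OF z False] False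
    by (simp add: gauge_def field_simps)
  finally show ?thesis .
qed

lemma gauge_closure: "p \<in> closure U \<longleftrightarrow> gauge U p \<le> 1"
proof (cases "p = 0")
  case True then show ?thesis using z closure_subset by (auto simp: gauge_def)
next
  case False
  have "p \<in> closure U \<longleftrightarrow> 1 \<le> exit_param U 0 p" using exit_param_props(4)[OF z False, of 1] by simp
  also have "\<dots> \<longleftrightarrow> gauge U p \<le> 1" using exit_param_props(1)[OF z False] False
    by (simp add: gauge_def field_simps)
  finally show ?thesis .
qed

lemma gauge_less: "a > 0 \<Longrightarrow> gauge U p < a \<longleftrightarrow> (1/a) *\<^sub>R p \<in> U"
  using gauge_U[of "(1/a) *\<^sub>R p"] gauge_scale[of "1/a" p] by (auto simp: field_simps)

lemma gauge_measurable: "gauge U \<in> borel_measurable borel"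
proof (rule borel_measurableI_less)
  fix y :: real
  show "{x \<in> space borel. gauge U x < y} \<in> sets borel"
  proof (cases "y > 0")
    case True
    have "{x \<in> space borel. gauge U x < y} = (\<lambda>x. (1/y) *\<^sub>R x) -` U"
      using gauge_less[OF True] by auto
    moreover have "open ((\<lambda>x. (1/y) *\<^sub>R x) -` U)"
      by (intro continuous_open_vimage oU continuous_intros)
    ultimately show ?thesis by auto
  next
    case False
    hence "{x \<in> space borel. gauge U x < y} = {}" using gauge_nonneg by (auto simp: not_less intro: order_trans)
    thus ?thesis by simp
  qed
qed

lemma hilbert_dist_eq:
  assumes q: "q \<in> U"
  shows "hilbert_dist U 0 q = ln ((1 + gauge U (- q)) / (1 - gauge U q)) / 2"
proof (cases "q = 0")
  case True then show ?thesis by (simp add: hilbert_dist_def gauge_def)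
next
  case False
  have mq: "- q \<noteq> 0" using False by simp
  define E where "E = exit_param U 0 q"
  define E' where "E' = exit_param U 0 (- q)"
  have E: "E > 0" "E' > 0" using exit_param_props(1)[OF z False] exit_param_props(1)[OF z mq]
    by (auto simp: E_def E'_def)
  have E1: "E > 1" using gauge_U q False E by (simp add: gauge_def E_def field_simps)
  have nq: "norm q > 0" using False by simp
  have "hilbert_dist U 0 q = ln ((E * norm q / (E' * norm q)) * ((1 + E') * norm q / ((E - 1) * norm q))) / 2"
  proof -
    have a: "norm (0 - bdry_point U 0 (q - 0)) = E * norm q" using E by (simp add: bdry_point_def E_def)
    have b: "norm (0 - bdry_point U 0 (0 - q)) = E' * norm q" using E by (simp add: bdry_point_def E'_def)
    have c: "norm (q - bdry_point U 0 (0 - q)) = (1 + E') * norm q"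
    proof -
      have "q - bdry_point U 0 (0 - q) = (1 + E') *\<^sub>R q" by (simp add: bdry_point_def E'_def algebra_simps)
      thus ?thesis using E by simp
    qed
    have d: "norm (q - bdry_point U 0 (q - 0)) = (E - 1) * norm q"
    proof -
      have "q - bdry_point U 0 (q - 0) = (1 - E) *\<^sub>R q" by (simp add: bdry_point_def E_def algebra_simps)
      thus ?thesis using E1 by simp
    qed
    show ?thesis unfolding hilbert_dist_def Let_def using False a b c d
      by (simp del: diff_0 diff_0_right)
  qed
  also have "(E * norm q / (E' * norm q)) * ((1 + E') * norm q / ((E - 1) * norm q))
      = (1 + gauge U (- q)) / (1 - gauge U q)"
    using E E1 nq False by (simp add: gauge_def E_def[symmetric] E'_def[symmetric] field_simps)
  finally show ?thesis .
qed

lemma radial_eq: "u \<noteq> 0 \<Longrightarrow> radial U u = 1 / gauge U u"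
  by (simp add: radial_def gauge_def)

lemma ratio_eq: "u \<noteq> 0 \<Longrightarrow> radial U u / radial U (- u) = gauge U (- u) / gauge U u"
proof -
  assume u: "u \<noteq> 0"
  hence "-u \<noteq> 0" by simp
  thus ?thesis unfolding radial_eq[OF u] radial_eq[OF \<open>-u \<noteq> 0\<close>] by simp
qed

lemma ratio_pos: "u \<noteq> 0 \<Longrightarrow> radial U u / radial U (- u) > 0"
  using ratio_eq[of u] gauge_pos[of u] gauge_pos[of "-u"] by simp


lemma ratio_bdd: "bdd_above ((\<lambda>u. radial U u / radial U (- u)) ` sphere 0 1)"
proof -
  obtain \<delta> where d: "\<delta> > 0" "ball 0 \<delta> \<subseteq> U" using oU z open_contains_ball by blast
  obtain B where B: "\<forall>x\<in>U. norm x \<le> B" using bU bounded_iff by auto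
  have up: "gauge U u < 2/\<delta>" if "norm u = 1" for u :: 'a
    using d that by (subst gauge_less) auto
  have low: "gauge U u \<ge> 1/(\<bar>B\<bar>+1)" if "norm u = 1" for u :: 'a
  proof (rule ccontr)
    assume "\<not> ?thesis"
    hence "(\<bar>B\<bar>+1) *\<^sub>R u \<in> U" using gauge_less[of "1/(\<bar>B\<bar>+1)" u] by simp
    hence "norm ((\<bar>B\<bar>+1) *\<^sub>R u) \<le> B" using B by blast
    thus False using that by simp
  qed
  show ?thesis
  proof (rule bdd_aboveI2[of _ _ "(2/\<delta>) * (\<bar>B\<bar>+1)"])
    fix u :: 'a assume "u \<in> sphere 0 1"
    hence u: "norm u = 1" by simp
    hence u0: "u \<noteq> 0" by auto
    have "gauge U (- u) / gauge U u \<le> (2/\<delta>) / (1/(\<bar>B\<bar>+1))"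
      using d(1) up[of "-u"] low[of u] u gauge_nonneg[of "-u"]
      by (intro frac_le) auto
    thus "radial U u / radial U (- u) \<le> 2 / \<delta> * (\<bar>B\<bar> + 1)" using ratio_eq[OF u0] by simp
  qed
qed

lemma ratio_scale: "q \<noteq> 0 \<Longrightarrow>
   gauge U (- ((1/norm q) *\<^sub>R q)) / gauge U ((1/norm q) *\<^sub>R q) = gauge U (- q) / gauge U q"
proof -
  assume q: "q \<noteq> 0"
  have "- ((1/norm q) *\<^sub>R q) = (1/norm q) *\<^sub>R (- q)" by simp
  thus ?thesis using gauge_scale[of "1/norm q" q] gauge_scale[of "1/norm q" "-q"] q by simp
qed

lemma PhiMap_props:
  assumes u: "norm u = 1" and s: "s > 0"
  shows "gauge U (PhiMap U u s) = tanh s"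
    "gauge U (- PhiMap U u s) = tanh s * (gauge U (- u) / gauge U u)"
proof -
  have u0: "u \<noteq> 0" using u by auto
  have gp: "gauge U u > 0" using gauge_pos[OF u0] .
  have P: "PhiMap U u s = (tanh s / gauge U u) *\<^sub>R u"
    unfolding PhiMap_def radial_eq[OF u0] by simp
  have a: "tanh s / gauge U u > 0" using s gp by simp
  show "gauge U (PhiMap U u s) = tanh s" unfolding P using gauge_scale[OF a, of u] gp by simp
  have "- PhiMap U u s = (tanh s / gauge U u) *\<^sub>R (- u)" unfolding P by simp
  thus "gauge U (- PhiMap U u s) = tanh s * (gauge U (- u) / gauge U u)"
    using gauge_scale[OF a, of "-u"] by simp
qed

lemma PhiMap_repr:
  assumes q: "q \<in> U" "q \<noteq> 0"
  shows "PhiMap U ((1/norm q) *\<^sub>R q) (artanh (gauge U q)) = q"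
proof -
  have g: "0 < gauge U q" "gauge U q < 1" using gauge_pos[OF q(2)] gauge_U q(1) by auto
  have t: "tanh (artanh (gauge U q)) = gauge U q" using g by (intro tanh_artanh_real) auto
  have u0: "(1/norm q) *\<^sub>R q \<noteq> 0" using q by simp
  have nq: "norm q > 0" using q by simp
  have "gauge U ((1/norm q) *\<^sub>R q) = gauge U q / norm q" using gauge_scale[of "1/norm q" q] nq by simp
  thus ?thesis unfolding PhiMap_def radial_eq[OF u0] t using g nq by simp
qed

lemma finsler_set_open: "open (finsler_set U)"
proof -
  have "finsler_set U = (\<Union>\<alpha>\<in>{0<..}. \<Union>\<beta>\<in>{\<beta>. \<beta> > 0 \<and> 1/\<alpha> + 1/\<beta> < 2}.
      ((\<lambda>z. fst z + \<alpha> *\<^sub>R snd z) -` U) \<inter> ((\<lambda>z. fst z - \<beta> *\<^sub>R snd z) -` U))"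
    by (auto simp: finsler_set_def) (meson greaterThan_iff, meson)
  moreover have "open \<dots>"
    by (intro open_UN ballI open_Int continuous_open_vimage oU continuous_intros)
  ultimately show ?thesis by simp
qed

lemma finsler_set_section:
  assumes p: "p \<in> U"
  shows "Pair p -` finsler_set U = {v. finsler_U U p v < 1}"
proof (intro set_eqI)
  fix v :: 'a
  show "v \<in> Pair p -` finsler_set U \<longleftrightarrow> v \<in> {v. finsler_U U p v < 1}"
  proof (cases "v = 0")
    case True
    then show ?thesis using p unfolding finsler_set_def finsler_U_def
      by (auto intro!: exI[of _ 2])
  next
    case False
    hence mv: "- v \<noteq> 0" by simp
    define a where "a = exit_param U p v"
    define b where "b = exit_param U p (- v)"
    have ab: "a > 0" "b > 0" using exit_param_props(1)[OF p False] exit_param_props(1)[OF p mv]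
      by (auto simp: a_def b_def)
    have inA: "\<And>s. s \<ge> 0 \<Longrightarrow> p + s *\<^sub>R v \<in> U \<longleftrightarrow> s < a"
      using exit_param_props(3)[OF p False] by (simp add: a_def)
    have inB: "\<And>s. s \<ge> 0 \<Longrightarrow> p - s *\<^sub>R v \<in> U \<longleftrightarrow> s < b"
      using exit_param_props(3)[OF p mv] by (simp add: b_def)
    have F: "finsler_U U p v = (1/a + 1/b)/2"
    proof -
      have n1: "norm (p - bdry_point U p v) = a * norm v" using ab by (simp add: bdry_point_def a_def)
      have n2: "norm (p - bdry_point U p (- v)) = b * norm v" using ab by (simp add: bdry_point_def b_def)
      show ?thesis unfolding finsler_U_def n1 n2 using False ab by (simp add: field_simps)
    qed
    have "v \<in> Pair p -` finsler_set U \<longleftrightarrow> (\<exists>\<alpha>>0. \<exists>\<beta>>0. \<alpha> < a \<and> \<beta> < b \<and> 1/\<alpha> + 1/\<beta> < 2)"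
      unfolding finsler_set_def using inA inB by (auto intro: less_imp_le) (meson less_imp_le)+
    also have "\<dots> \<longleftrightarrow> 1/a + 1/b < 2"
    proof
      assume "\<exists>\<alpha>>0. \<exists>\<beta>>0. \<alpha> < a \<and> \<beta> < b \<and> 1/\<alpha> + 1/\<beta> < 2"
      then obtain \<alpha> \<beta> where h: "\<alpha> > 0" "\<beta> > 0" "\<alpha> < a" "\<beta> < b" "1/\<alpha> + 1/\<beta> < 2" by blast
      have "1/a < 1/\<alpha>" "1/b < 1/\<beta>" using h by (auto intro: divide_strict_left_mono)
      thus "1/a + 1/b < 2" using h by linarith
    next
      assume h: "1/a + 1/b < 2"
      define e where "e = (2 - 1/a - 1/b)/4"
      have e: "e > 0" using h by (simp add: e_def)
      have pa: "1/a + e > 0" "1/b + e > 0" using ab e by (auto intro: add_pos_pos)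
      show "\<exists>\<alpha>>0. \<exists>\<beta>>0. \<alpha> < a \<and> \<beta> < b \<and> 1/\<alpha> + 1/\<beta> < 2"
      proof (intro exI conjI)
        show "1/(1/a + e) > 0" "1/(1/b + e) > 0" using pa by auto
        have "1/a < 1/a + e" "1/b < 1/b + e" using e by auto
        have "1/(1/a + e) < 1/(1/a)" using ab e
          by (intro divide_strict_left_mono) (auto intro!: mult_pos_pos add_pos_pos divide_pos_pos)
        thus "1/(1/a + e) < a" by simp
        have "1/(1/b + e) < 1/(1/b)" using ab e
          by (intro divide_strict_left_mono) (auto intro!: mult_pos_pos add_pos_pos divide_pos_pos)
        thus "1/(1/b + e) < b" by simp
        have "1/(1/(1/a + e)) + 1/(1/(1/b + e)) = 1/a + 1/b + 2*e" by simp
        also have "\<dots> < 2" using h unfolding e_def by (simp add: field_simps)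
        finally show "1/(1/(1/a + e)) + 1/(1/(1/b + e)) < 2" .
      qed
    qed
    also have "\<dots> \<longleftrightarrow> v \<in> {v. finsler_U U p v < 1}" unfolding mem_Collect_eq F by (simp add: field_simps)
    finally show ?thesis .
  qed
qed

lemma finsler_section_bounded:
  assumes p: "p \<in> U"
  shows "bounded (Pair p -` finsler_set U)"
proof -
  obtain B where B: "\<forall>x\<in>U. norm x \<le> B" using bU bounded_iff by auto
  have "norm v \<le> B + norm p" if vin: "v \<in> Pair p -` finsler_set U" for v
  proof -
    obtain \<alpha> \<beta> where h: "\<alpha> > 0" "\<beta> > 0" "p + \<alpha> *\<^sub>R v \<in> U" "p - \<beta> *\<^sub>R v \<in> U" "1/\<alpha> + 1/\<beta> < 2"
      using vin by (auto simp: finsler_set_def)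
    have key: "norm v \<le> B + norm p" if "\<gamma> > 1" "p + \<gamma> *\<^sub>R w \<in> U" "norm w = norm v" for \<gamma> w
    proof -
      have "\<gamma> * norm w = norm (\<gamma> *\<^sub>R w)" using that by simp
      also have "\<dots> \<le> norm (p + \<gamma> *\<^sub>R w) + norm p" by (metis add_diff_cancel_left' norm_triangle_ineq4 add.commute)
      also have "\<dots> \<le> B + norm p" using B that by auto
      finally have "\<gamma> * norm w \<le> B + norm p" .
      moreover have "1 * norm w \<le> \<gamma> * norm w" using that by (intro mult_right_mono) auto
      ultimately show ?thesis using that by simp
    qed
    show ?thesis
    proof (cases "\<alpha> > 1")
      case True then show ?thesis using key[of \<alpha> v] h by auto
    next
      case False
      hence "1/\<alpha> \<ge> 1" using h by simp
      hence "1/\<beta> < 1" using h by linarith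
      hence "\<beta> > 1" using h by (simp add: field_simps)
      thus ?thesis using key[of \<beta> "-v"] h by auto
    qed
  qed
  thus ?thesis unfolding bounded_iff by blast
qed

lemma finsler_measure_measurable:
  "(\<lambda>p. measure lborel (Pair p -` finsler_set U)) \<in> borel_measurable borel"
proof -
  have "finsler_set U \<in> sets (lborel \<Otimes>\<^sub>M lborel)"
    unfolding lborel_prod using finsler_set_open by simp
  from lborel.measurable_emeasure_Pair[OF this]
  have "(\<lambda>p. emeasure lborel (Pair p -` finsler_set U)) \<in> borel_measurable borel" by simp
  thus ?thesis unfolding measure_def by measurable
qed

lemma finsler_section_open: "open (Pair p -` finsler_set U)"
  by (intro continuous_open_vimage finsler_set_open continuous_intros)

lemma BH_density_eq:
  assumes p: "p \<in> U"
  shows "BH_density U p = measure lebesgue (ball (0::'a) 1) / measure lborel (Pair p -` finsler_set U)"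
proof -
  have "Pair p -` finsler_set U \<in> sets lborel" using finsler_section_open by simp
  thus ?thesis unfolding BH_density_def finsler_set_section[OF p, symmetric] by simp
qed

lemma finsler_section_lower:
  assumes p: "p \<in> U" and e: "e > 0" and ball: "\<And>w. norm w < e \<Longrightarrow> p + w \<in> U"
  shows "measure lborel (Pair p -` finsler_set U) \<ge> measure lebesgue (ball (0::'a) (e/2))"
proof -
  have sub: "ball 0 (e/2) \<subseteq> Pair p -` finsler_set U"
  proof
    fix v :: 'a assume "v \<in> ball 0 (e/2)"
    hence n: "norm (2 *\<^sub>R v) < e" "norm (- (2 *\<^sub>R v)) < e" by auto
    have "p + 2 *\<^sub>R v \<in> U" by (rule ball[OF n(1)])
    moreover have "p + (- (2 *\<^sub>R v)) \<in> U" by (rule ball[OF n(2)])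
    ultimately have "p + 2 *\<^sub>R v \<in> U" "p - 2 *\<^sub>R v \<in> U" by simp_all
    thus "v \<in> Pair p -` finsler_set U" unfolding finsler_set_def by (auto intro!: exI[of _ 2])
  qed
  have fm: "Pair p -` finsler_set U \<in> fmeasurable lborel"
    using finsler_section_open finsler_section_bounded[OF p] emeasure_bounded_finite
    by (intro fmeasurableI) auto
  have "measure lborel (ball (0::'a) (e/2)) \<le> measure lborel (Pair p -` finsler_set U)"
    using measure_mono_fmeasurable[OF sub _ fm] by simp
  thus ?thesis by simp
qed

lemma PhiMap_zero: "PhiMap U u 0 = 0"
  by (simp add: PhiMap_def)

lemma PhiMap_in_U: "norm u = 1 \<Longrightarrow> s \<ge> 0 \<Longrightarrow> PhiMap U u s \<in> U"
  using PhiMap_props(1)[of u s] gauge_U z tanh_real_lt_1[of s] PhiMap_zero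
  by (cases "s = 0") auto

lemma PhiImage_eq:
  assumes R: "R > 0"
  shows "PhiImage U R = {p. gauge U p \<le> tanh R}"
proof (intro set_eqI iffI)
  fix p assume "p \<in> PhiImage U R"
  then obtain u s where us: "norm u = 1" "0 \<le> s" "s \<le> R" "p = PhiMap U u s"
    unfolding PhiImage_def by auto
  show "p \<in> {p. gauge U p \<le> tanh R}"
  proof (cases "s = 0")
    case True then show ?thesis using us R by (simp add: PhiMap_zero gauge_def less_imp_le)
  next
    case False then show ?thesis using us PhiMap_props(1)[of u s] by simp
  qed
next
  fix p assume p: "p \<in> {p. gauge U p \<le> tanh R}"
  obtain b :: 'a where b: "b \<in> Basis" using nonempty_Basis by blast
  hence nb: "norm b = 1" by simp
  show "p \<in> PhiImage U R"
  proof (cases "p = 0")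
    case True
    have "b \<in> sphere 0 1" using nb by simp
    hence "PhiMap U b 0 \<in> PhiImage U R" unfolding PhiImage_def using R by fastforce
    thus ?thesis using True PhiMap_zero by simp
  next
    case False
    have g: "gauge U p > 0" "gauge U p < 1" using gauge_pos[OF False] p tanh_real_lt_1[of R] by auto
    hence pU: "p \<in> U" using gauge_U by simp
    define s where "s = artanh (gauge U p)"
    have ts: "tanh s = gauge U p" unfolding s_def using g by (intro tanh_artanh_real) auto
    have "s \<ge> 0" using ts g by (metis tanh_real_pos_iff less_imp_le)
    moreover have "tanh s \<le> tanh R" using ts p by simp
    hence "s \<le> R" by simp
    moreover have "(1/norm p) *\<^sub>R p \<in> sphere 0 1" using False by simp
    ultimately have "PhiMap U ((1/norm p) *\<^sub>R p) s \<in> PhiImage U R" unfolding PhiImage_def by fastforce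
    thus ?thesis using PhiMap_repr[OF pU False] by (simp add: s_def)
  qed
qed

lemma hball_eq:
  "hball U \<rho> = {p. gauge U p < 1 \<and> ln ((1 + gauge U (- p)) / (1 - gauge U p)) / 2 \<le> \<rho>}"
proof (intro set_eqI)
  fix x
  show "x \<in> hball U \<rho> \<longleftrightarrow> x \<in> {p. gauge U p < 1 \<and> ln ((1 + gauge U (- p)) / (1 - gauge U p)) / 2 \<le> \<rho>}"
  proof (cases "x \<in> U")
    case True
    then show ?thesis unfolding hball_def mem_Collect_eq hilbert_dist_eq[OF True] using gauge_U[of x] by blast
  next
    case False
    then show ?thesis unfolding hball_def using gauge_U[of x] by simp
  qed
qed

lemma hball_borel: "hball U \<rho> \<in> sets borel"
proof -
  note gm[measurable] = gauge_measurable
  have [measurable]: "(\<lambda>p. gauge U (- p)) \<in> borel_measurable borel" by measurable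
  show ?thesis unfolding hball_eq by measurable
qed

lemma PhiImage_borel: "R > 0 \<Longrightarrow> PhiImage U R \<in> sets borel"
proof -
  assume "R > 0"
  note gm[measurable] = gauge_measurable
  show ?thesis unfolding PhiImage_eq[OF \<open>R > 0\<close>] by measurable
qed

end
end


theorem mainTheorem5:
  fixes U :: "'a::euclidean_space set"
  assumes "DIM('a) \<ge> 2"
    and "bounded U" and "open U" and "convex U" and "(0::'a) \<in> U"
    and "C3_pos_curv_boundary U"
  defines "c \<equiv> Sup ((\<lambda>u. radial U u / radial U (- u)) ` sphere (0::'a) 1)"
  defines "d1 \<equiv> - 1/2 * ln (1/2 * (1 + 1 / c))"
  defines "d2 \<equiv> - 1/2 * ln (1/2 * (1 + c))"
  shows "(\<forall>d \<ge> d1. \<exists>\<rho>0. \<forall>\<rho> \<ge> \<rho>0. hball U \<rho> \<subseteq> PhiImage U (\<rho> + d))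
       \<and> (\<forall>d \<le> d2. \<exists>\<rho>0. \<forall>\<rho> \<ge> \<rho>0. PhiImage U (\<rho> + d) \<subseteq> hball U \<rho>)
       \<and> (\<exists>\<rho>0. \<forall>\<rho> \<ge> \<rho>0. BH_vol U (PhiImage U (\<rho> + d2)) \<le> BH_vol U (hball U \<rho>)
                          \<and> BH_vol U (hball U \<rho>) \<le> BH_vol U (PhiImage U (\<rho> + d1)))
       \<and> ((\<forall>x. x \<in> U \<longleftrightarrow> - x \<in> U) \<longrightarrow> d1 = 0 \<and> d2 = 0)"
proof -
  note H = assms(2) assms(3) assms(4) assms(5)
  note gpos = gauge_pos[OF H] and gnn = gauge_nonneg[OF H] and gscale = gauge_scale[OF H]
    and gU = gauge_U[OF H] and hd = hilbert_dist_eq[OF H] and req = ratio_eq[OF H]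
    and rpos = ratio_pos[OF H] and rbdd = ratio_bdd[OF H] and rscale = ratio_scale[OF H]
    and Pprops = PhiMap_props[OF H] and Prepr = PhiMap_repr[OF H] and P0 = PhiMap_zero[OF H]
    and PU = PhiMap_in_U[OF H]
  define r where "r = (\<lambda>u. radial U u / radial U (- u))"
  obtain b :: 'a where b: "b \<in> Basis" using nonempty_Basis by blast
  hence bs: "b \<in> sphere 0 1" "norm b = 1" "b \<noteq> 0" by auto
  have r_le: "r u \<le> c" if "norm u = 1" for u
    unfolding c_def r_def using rbdd that by (intro cSup_upper) auto
  have r_inv: "r (- u) = 1 / r u" if "u \<noteq> 0" for u
    using req[OF that] req[of "-u"] that gpos[OF that] gpos[of "-u"] by (simp add: r_def)
  have r_pos: "r u > 0" if "u \<noteq> 0" for u using rpos[OF that] by (simp add: r_def)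
  have c1: "c \<ge> 1"
  proof (cases "r b \<ge> 1")
    case True then show ?thesis using r_le[OF bs(2)] by simp
  next
    case False
    have "1 / r b > 1" using False r_pos[OF bs(3)] by (simp add: field_simps)
    moreover have "r (- b) \<le> c" using r_le[of "-b"] bs by simp
    ultimately show ?thesis using r_inv[OF bs(3)] by simp
  qed
  have r_low: "1 / c \<le> r u" if "norm u = 1" for u
  proof -
    have u0: "u \<noteq> 0" using that by auto
    have "1 / r u \<le> c" using r_le[of "-u"] that r_inv[OF u0] by simp
    thus ?thesis using r_pos[OF u0] c1 by (simp add: field_simps)
  qed
  have d1_nn: "d1 \<ge> 0"
  proof -
    have "1/2 * (1 + 1/c) \<le> 1" using c1 by (simp add: field_simps)
    moreover have "1/2 * (1 + 1/c) > 0" using c1 by (simp add: add_pos_pos)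
    ultimately have "ln (1/2 * (1 + 1/c)) \<le> 0" by simp
    thus ?thesis by (simp add: d1_def)
  qed
  have d2_np: "d2 \<le> 0"
  proof -
    have "1/2 * (1 + c) \<ge> 1" using c1 by simp
    hence "ln (1/2 * (1 + c)) \<ge> 0" by simp
    thus ?thesis by (simp add: d2_def)
  qed
  have hd0: "hilbert_dist U 0 0 = 0" by (simp add: hilbert_dist_def)
  have part1: "hball U \<rho> \<subseteq> PhiImage U (\<rho> + d)" if d: "d \<ge> d1" for \<rho> d
  proof
    fix q assume q: "q \<in> hball U \<rho>"
    hence qU: "q \<in> U" and qd: "hilbert_dist U 0 q \<le> \<rho>" by (auto simp: hball_def)
    show "q \<in> PhiImage U (\<rho> + d)"
    proof (cases "q = 0")
      case True
      have "0 \<le> \<rho> + d" using qd True hd0 d d1_nn by simp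
      hence "PhiMap U b 0 \<in> PhiImage U (\<rho> + d)" unfolding PhiImage_def using bs by fastforce
      thus ?thesis using True P0 by simp
    next
      case False
      define g where "g = gauge U q"
      have g: "0 < g" "g < 1" using gpos[OF False] gU qU by (auto simp: g_def)
      define u where "u = (1/norm q) *\<^sub>R q"
      have u: "norm u = 1" "u \<noteq> 0" using False by (auto simp: u_def)
      have k: "r u = gauge U (- q) / g" using req[OF u(2)] rscale[OF False] by (simp add: r_def u_def g_def)
      have gq: "gauge U (- q) = r u * g" using k g by simp
      have "ln ((1+g)/(1-g))/2 \<le> ln ((1+r u*g)/(1-g))/2 + d1"
        unfolding d1_def using ineq1[OF g, of "1/c" "r u"] c1 r_low[OF u(1)] by (simp add: field_simps)
      also have "ln ((1+r u*g)/(1-g))/2 = hilbert_dist U 0 q" using hd[OF qU] gq by (simp add: g_def)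
      finally have s_le: "artanh g \<le> \<rho> + d" using qd d by (simp add: artanh_def)
      have ts: "tanh (artanh g) = g" using g by (intro tanh_artanh_real) auto
      have s_nn: "artanh g \<ge> 0" using ts g by (metis tanh_real_pos_iff less_imp_le)
      have "u \<in> sphere 0 1" using u by simp
      hence "PhiMap U u (artanh g) \<in> PhiImage U (\<rho> + d)" unfolding PhiImage_def using s_le s_nn by fastforce
      thus ?thesis using Prepr[OF qU False] by (simp add: u_def g_def)
    qed
  qed
  have part2: "PhiImage U (\<rho> + d) \<subseteq> hball U \<rho>" if d: "d \<le> d2" for \<rho> d
  proof
    fix p assume "p \<in> PhiImage U (\<rho> + d)"
    then obtain u s where us: "norm u = 1" "0 \<le> s" "s \<le> \<rho> + d" "p = PhiMap U u s"
      unfolding PhiImage_def by auto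
    have u0: "u \<noteq> 0" using us by auto
    have pU: "p \<in> U" using PU us by simp
    show "p \<in> hball U \<rho>"
    proof (cases "s = 0")
      case True
      hence "p = 0" using us P0 by simp
      thus ?thesis using pU hd0 us True d d2_np by (simp add: hball_def)
    next
      case False
      hence s: "s > 0" using us by simp
      define t where "t = tanh s"
      have t: "0 < t" "t < 1" using s by (auto simp: t_def tanh_real_lt_1)
      have gp: "gauge U p = t" "gauge U (- p) = t * r u"
        using Pprops[OF us(1) s] req[OF u0] us(4) by (auto simp: t_def r_def)
      have "hilbert_dist U 0 p = ln ((1+t*r u)/(1-t))/2" using hd[OF pU] gp by simp
      also have "\<dots> \<le> ln ((1+t)/(1-t))/2 - d2"
        unfolding d2_def using ineq2[OF t r_pos[OF u0] r_le[OF us(1)] c1] by simp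
      also have "ln ((1+t)/(1-t))/2 = s" using artanh_tanh_real[of s] by (simp add: artanh_def t_def)
      finally show ?thesis using pU us d by (simp add: hball_def)
    qed
  qed
  have part4: "d1 = 0 \<and> d2 = 0" if sym: "\<forall>x. x \<in> U \<longleftrightarrow> - x \<in> U"
  proof -
    have gsym: "gauge U (- u) = gauge U u" if u: "u \<noteq> 0" for u
    proof (rule thresholds_eq2)
      show "gauge U (- u) > 0" "gauge U u > 0" using gpos u by auto
      show "\<forall>a>0. gauge U (- u) < a \<longleftrightarrow> gauge U u < a"
        using gauge_less[OF H] sym by (metis scaleR_minus_right)
    qed
    have "(\<lambda>u. radial U u / radial U (- u)) ` sphere 0 1 = {1}"
    proof (intro set_eqI iffI)
      fix x assume "x \<in> (\<lambda>u. radial U u / radial U (- u)) ` sphere 0 1"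
      then obtain u where u: "u \<in> sphere 0 1" "x = radial U u / radial U (- u)" by auto
      hence u0: "u \<noteq> 0" by auto
      show "x \<in> {1}" using u req[OF u0] gsym[OF u0] gpos[OF u0] by simp
    next
      fix x :: real assume "x \<in> {1}"
      hence "x = radial U b / radial U (- b)" using req[OF bs(3)] gsym[OF bs(3)] gpos[OF bs(3)] by simp
      thus "x \<in> (\<lambda>u. radial U u / radial U (- u)) ` sphere 0 1" using bs by auto
    qed
    hence "c = 1" unfolding c_def by simp
    thus ?thesis by (simp add: d1_def d2_def)
  qed
  have part3: "BH_vol U (PhiImage U (\<rho> + d2)) \<le> BH_vol U (hball U \<rho>)
        \<and> BH_vol U (hball U \<rho>) \<le> BH_vol U (PhiImage U (\<rho> + d1))" if \<rho>: "\<rho> \<ge> 1 - d2" for \<rho>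
  proof -
    define R1 where "R1 = \<rho> + d1"
    define R2 where "R2 = \<rho> + d2"
    have R: "R1 > 0" "R2 > 0" using \<rho> d1_nn d2_np by (auto simp: R1_def R2_def)
    define T where "T = tanh R1"
    have T: "0 < T" "T < 1" using R by (auto simp: T_def tanh_real_lt_1)
    define K where "K = PhiImage U R1"
    have Keq: "K = {p. gauge U p \<le> T}" unfolding K_def T_def by (rule PhiImage_eq[OF H R(1)])
    have KU: "K \<subseteq> U" using Keq T gU by auto
    have sA: "PhiImage U R2 \<in> sets lebesgue" using PhiImage_borel[OF H R(2)] by simp
    have sB: "hball U \<rho> \<in> sets lebesgue" using hball_borel[OF H] by simp
    have sK: "K \<in> sets lebesgue" using PhiImage_borel[OF H R(1)] by (simp add: K_def)
    have AB: "PhiImage U R2 \<subseteq> hball U \<rho>" using part2[of d2 \<rho>] by (simp add: R2_def)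
    have BK: "hball U \<rho> \<subseteq> K" using part1[of d1 \<rho>] by (simp add: R1_def K_def)
    obtain \<delta> where dl: "\<delta> > 0" "ball 0 \<delta> \<subseteq> U" using assms(3) assms(5) open_contains_ball by blast
    define e where "e = (1 - T) * \<delta>"
    have e: "e > 0" using T dl by (simp add: e_def)
    have near: "p + w \<in> U" if p: "p \<in> K" and w: "norm w < e" for p w
    proof -
      have "gauge U ((1/T) *\<^sub>R p) = gauge U p / T" using gscale[of "1/T" p] T by simp
      moreover have "gauge U p \<le> T" using p Keq by simp
      ultimately have "gauge U ((1/T) *\<^sub>R p) \<le> 1" using T by simp
      hence x: "(1/T) *\<^sub>R p \<in> closure U" using gauge_closure[OF H] by simp
      have "norm ((1/(1-T)) *\<^sub>R w) < \<delta>" using w T by (simp add: e_def field_simps)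
      hence "(1/(1-T)) *\<^sub>R w \<in> ball 0 \<delta>" by simp
      hence "(1/(1-T)) *\<^sub>R w \<in> U" using dl(2) by blast
      hence c0: "(1/(1-T)) *\<^sub>R w \<in> interior U" using interior_open[OF assms(3)] by simp
      have "(1/T) *\<^sub>R p - (1-T) *\<^sub>R ((1/T) *\<^sub>R p - (1/(1-T)) *\<^sub>R w) \<in> interior U"
        using mem_interior_closure_convex_shrink[OF assms(4) c0 x, of "1-T"] T by simp
      moreover have "(1/T) *\<^sub>R p - (1-T) *\<^sub>R ((1/T) *\<^sub>R p - (1/(1-T)) *\<^sub>R w) = p + w"
      proof -
        have c1: "(1-T) * (1/(1-T)) = 1" using T by simp
        have c2: "1/T - (1-T)*(1/T) = 1" using T by (simp add: field_simps)
        have "(1/T) *\<^sub>R p - (1-T) *\<^sub>R ((1/T) *\<^sub>R p - (1/(1-T)) *\<^sub>R w)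
            = (1/T - (1-T)*(1/T)) *\<^sub>R p + ((1-T) * (1/(1-T))) *\<^sub>R w"
          by (simp only: scaleR_diff_right scaleR_scaleR scaleR_diff_left) (simp add: algebra_simps)
        also have "\<dots> = p + w" unfolding c1 c2 by simp
        finally show ?thesis .
      qed
      ultimately show ?thesis using interior_subset by auto
    qed
    define C0 where "C0 = measure lebesgue (ball (0::'a) 1)"
    define L where "L = measure lebesgue (ball (0::'a) (e/2))"
    have L: "L > 0" using e by (simp add: L_def)
    define f where "f = (\<lambda>p. C0 / measure lborel (Pair p -` finsler_set U))"
    have fm: "f \<in> borel_measurable lebesgue"
      unfolding f_def by (intro measurable_completion borel_measurable_divide borel_measurable_const)
        (use finsler_measure_measurable[OF H] in simp)
    have fbound: "norm (f p) \<le> C0 / L" if "p \<in> K" for p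
    proof -
      have "L \<le> measure lborel (Pair p -` finsler_set U)"
        unfolding L_def using finsler_section_lower[OF H _ e near[OF that]] that KU by auto
      moreover have "C0 \<ge> 0" by (simp add: C0_def)
      ultimately show ?thesis using L unfolding f_def
        by (simp add: frac_le)
    qed
    have Kb: "K \<in> sets lborel" using PhiImage_borel[OF H R(1)] by (simp add: K_def)
    have "bounded K" using KU assms(2) bounded_subset by blast
    hence Kfin: "emeasure lebesgue K < \<infinity>" using Kb emeasure_bounded_finite by simp
    have "integrable lebesgue (\<lambda>x. indicator K x *\<^sub>R f x)"
      by (rule integrableI_bounded_set_indicator[where B="C0/L", OF sK fm Kfin])
        (use fbound in auto)
    moreover have "(\<lambda>x. indicator K x *\<^sub>R f x) = (\<lambda>x. indicator K x *\<^sub>R BH_density U x)"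
    proof
      fix x show "indicator K x *\<^sub>R f x = indicator K x *\<^sub>R BH_density U x"
        using BH_density_eq[OF H, of x] KU by (cases "x \<in> K") (auto simp: f_def C0_def)
    qed
    ultimately have int: "set_integrable lebesgue K (BH_density U)" by (simp add: set_integrable_def)
    have nn: "0 \<le> BH_density U x" for x by (simp add: BH_density_def)
    show ?thesis unfolding BH_vol_def
      using set_int_mono_sets[OF int sA sB AB BK nn] set_int_mono_sets[OF int sB sK BK order_refl nn]
      by (simp add: R1_def R2_def K_def)
  qed
  show ?thesis using part1 part2 part3 part4 by blast
qed

end
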